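(* Let $\langle \mathcal{P}, T\rangle$ be a VPT representation of a graph $G$, and let $q\in V(T)$ with $d_T(q)=h\geq 4$. Suppose there exist $y_1,y_2\in N_T(q)$ such that for every $v\in V(G)$, $\{y_1,y_2\}\not\subseteq V(P_v)$. Then there exists a VPT representation $\langle \mathcal{P}',T'\rangle$ of $G$ with $V(T')=V(T)\cup\{a_q\}$, where $a_q\notin V(T)$, such that $d_{T'}(a_q)=3$, $d_{T'}(q)=h-1$, and $d_{T'}(x)=d_T(x)$ for every $x\in V(T')\setminus\{q,a_q\}$.
   Context: All graphs are finite, simple and connected. A VPT representation $\langle \mathcal{P},T\rangle$ of a graph $G$ is a family $\mathcal{P}=(P_v)_{v\in V(G)}$ of subpaths of a tree $T$ such that two distinct vertices $v,v'$ of $G$ are adjacent iff $P_v$ and $P_{v'}$ share at least one vertex. *)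

theory Defs
  imports Main
begin

definition sgraph :: "'a set \<Rightarrow> ('a \<Rightarrow> 'a \<Rightarrow> bool) \<Rightarrow> bool" where
  "sgraph V E \<longleftrightarrow> finite V \<and> (\<forall>x y. E x y \<longrightarrow> x \<in> V \<and> y \<in> V)
     \<and> (\<forall>x y. E x y \<longrightarrow> E y x) \<and> (\<forall>x. \<not> E x x)"

definition connected_graph :: "'a set \<Rightarrow> ('a \<Rightarrow> 'a \<Rightarrow> bool) \<Rightarrow> bool" where
  "connected_graph V E \<longleftrightarrow> V \<noteq> {} \<and> (\<forall>x\<in>V. \<forall>y\<in>V. E\<^sup>*\<^sup>* x y)"

definition is_path :: "'a set \<Rightarrow> ('a \<Rightarrow> 'a \<Rightarrow> bool) \<Rightarrow> 'a list \<Rightarrow> bool" where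
  "is_path V E xs \<longleftrightarrow> xs \<noteq> [] \<and> distinct xs \<and> set xs \<subseteq> V
     \<and> (\<forall>i. Suc i < length xs \<longrightarrow> E (xs ! i) (xs ! Suc i))"

definition is_tree :: "'a set \<Rightarrow> ('a \<Rightarrow> 'a \<Rightarrow> bool) \<Rightarrow> bool" where
  "is_tree V E \<longleftrightarrow> sgraph V E \<and> connected_graph V E
     \<and> (\<forall>xs ys. is_path V E xs \<longrightarrow> is_path V E ys \<longrightarrow> hd xs = hd ys
          \<longrightarrow> last xs = last ys \<longrightarrow> xs = ys)"

definition nbhd :: "('a \<Rightarrow> 'a \<Rightarrow> bool) \<Rightarrow> 'a \<Rightarrow> 'a set" where
  "nbhd E x = {y. E x y}"

definition degree :: "('a \<Rightarrow> 'a \<Rightarrow> bool) \<Rightarrow> 'a \<Rightarrow> nat" where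
  "degree E x = card (nbhd E x)"

definition vpt_rep :: "'v set \<Rightarrow> ('v \<Rightarrow> 'v \<Rightarrow> bool) \<Rightarrow> 'a set \<Rightarrow> ('a \<Rightarrow> 'a \<Rightarrow> bool)
    \<Rightarrow> ('v \<Rightarrow> 'a list) \<Rightarrow> bool" where
  "vpt_rep VG EG VT ET P \<longleftrightarrow> is_tree VT ET
     \<and> (\<forall>v\<in>VG. is_path VT ET (P v))
     \<and> (\<forall>u\<in>VG. \<forall>v\<in>VG. u \<noteq> v \<longrightarrow> (EG u v \<longleftrightarrow> set (P u) \<inter> set (P v) \<noteq> {}))"

end

theory Submission
  imports Defs
begin

fun walk :: "('a \<Rightarrow> 'a \<Rightarrow> bool) \<Rightarrow> 'a list \<Rightarrow> bool" where
  "walk R [] = False"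
| "walk R [x] = True"
| "walk R (x # y # zs) = (R x y \<and> walk R (y # zs))"

lemma walk_idx: "walk R xs \<longleftrightarrow> xs \<noteq> [] \<and> (\<forall>i. Suc i < length xs \<longrightarrow> R (xs ! i) (xs ! Suc i))"
proof (induction R xs rule: walk.induct)
  case (3 R x y zs)
  show ?case
  proof
    assume "walk R (x # y # zs)"
    then show "x # y # zs \<noteq> [] \<and> (\<forall>i. Suc i < length (x # y # zs) \<longrightarrow> R ((x # y # zs) ! i) ((x # y # zs) ! Suc i))"
      using 3 by (auto simp: nth_Cons split: nat.splits)
  next
    assume a: "x # y # zs \<noteq> [] \<and> (\<forall>i. Suc i < length (x # y # zs) \<longrightarrow> R ((x # y # zs) ! i) ((x # y # zs) ! Suc i))"
    have "R x y" using a[THEN conjunct2, rule_format, of 0] by simp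
    moreover have "\<forall>i. Suc i < length (y # zs) \<longrightarrow> R ((y # zs) ! i) ((y # zs) ! Suc i)"
      using a[THEN conjunct2, rule_format, of "Suc _"] by simp
    ultimately show "walk R (x # y # zs)" using 3 by simp
  qed
qed auto

lemma is_path_walk: "is_path V E xs \<longleftrightarrow> distinct xs \<and> set xs \<subseteq> V \<and> walk E xs"
  unfolding is_path_def walk_idx by auto

lemma walk_append: "walk R (as @ y # cs) \<longleftrightarrow> walk R (as @ [y]) \<and> walk R (y # cs)"
proof (induction as)
  case (Cons a as)
  then show ?case by (cases as) auto
qed simp

lemma walk_of_rtranclp: "R\<^sup>*\<^sup>* x y \<Longrightarrow> \<exists>ws. walk R ws \<and> hd ws = x \<and> last ws = y"
proof (induction rule: converse_rtranclp_induct)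
  case base
  then show ?case by (intro exI[of _ "[y]"]) simp
next
  case (step x z)
  then obtain ws where "walk R ws" "hd ws = z" "last ws = y" by blast
  then show ?case using step by (intro exI[of _ "x # ws"]) (cases ws, auto)
qed

lemma walk_distinct: "walk R ws \<Longrightarrow> \<exists>ws'. walk R ws' \<and> distinct ws' \<and> hd ws' = hd ws \<and> last ws' = last ws"
proof (induction "length ws" arbitrary: ws rule: less_induct)
  case less
  show ?case
  proof (cases "distinct ws")
    case True then show ?thesis using less by blast
  next
    case False
    then obtain as y bs cs where ws: "ws = as @ [y] @ bs @ [y] @ cs" using not_distinct_decomp by blast
    let ?w = "as @ y # cs"
    have w1: "walk R (as @ [y])" "walk R (y # bs @ y # cs)" using less(2) ws walk_append[of R as y "bs @ y # cs"] by auto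
    have "walk R (y # cs)" using w1(2) walk_append[of R "y # bs" y cs] by simp
    then have "walk R ?w" using w1 walk_append[of R as y cs] by simp
    moreover have "length ?w < length ws" using ws by simp
    ultimately obtain ws' where "walk R ws' \<and> distinct ws' \<and> hd ws' = hd ?w \<and> last ws' = last ?w"
      using less(1) by blast
    moreover have "hd ?w = hd ws" "last ?w = last ws" using ws by (cases as; simp)+
    ultimately show ?thesis by metis
  qed
qed

lemma walk_mono: "walk R ws \<Longrightarrow> (\<forall>x y. R x y \<longrightarrow> S x y) \<Longrightarrow> walk S ws"
  by (induction R ws rule: walk.induct) auto

lemma walk_set: "walk E ws \<Longrightarrow> hd ws \<in> V \<Longrightarrow> (\<forall>x y. E x y \<longrightarrow> y \<in> V) \<Longrightarrow> set ws \<subseteq> V"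
  by (induction E ws rule: walk.induct) auto

definition sep_set :: "('a \<Rightarrow> 'a \<Rightarrow> bool) \<Rightarrow> 'a \<Rightarrow> 'a \<Rightarrow> 'a set \<Rightarrow> bool" where
  "sep_set E u v S \<longleftrightarrow> u \<in> S \<and> v \<notin> S \<and> (\<forall>x z. x \<in> S \<longrightarrow> E x z \<longrightarrow> \<not> (x = u \<and> z = v) \<longrightarrow> z \<in> S)"

lemma sep_flip: "(\<forall>x y. E x y \<longrightarrow> E y x) \<Longrightarrow> sep_set E u v S \<Longrightarrow> sep_set E v u (- S)"
  unfolding sep_set_def by blast

lemma tree_sep:
  assumes "is_tree V E" "E u v"
  shows "\<exists>S. sep_set E u v S \<and> S \<subseteq> V"
proof -
  have sg: "sgraph V E" using assms(1) is_tree_def by blast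
  define R where "R = (\<lambda>x z. E x z \<and> \<not> (x = u \<and> z = v) \<and> \<not> (x = v \<and> z = u))"
  define S where "S = {x. R\<^sup>*\<^sup>* u x} \<inter> V"
  have uV: "u \<in> V" "v \<in> V" using assms(2) sg unfolding sgraph_def by auto
  have "\<not> R\<^sup>*\<^sup>* u v"
  proof
    assume "R\<^sup>*\<^sup>* u v"
    then obtain ws0 where "walk R ws0" "hd ws0 = u" "last ws0 = v" using walk_of_rtranclp by metis
    then obtain ws where ws: "walk R ws" "distinct ws" "hd ws = u" "last ws = v" using walk_distinct by metis
    have wE: "walk E ws" using walk_mono[OF ws(1), of E] by (simp add: R_def)
    have EV: "\<forall>x y. E x y \<longrightarrow> y \<in> V" using sg unfolding sgraph_def by blast
    have "set ws \<subseteq> V" using walk_set[OF wE _ EV] ws(3) uV(1) by simp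
    then have p1: "is_path V E ws" unfolding is_path_walk using ws(2) wE by simp
    have "u \<noteq> v" using assms(2) sg unfolding sgraph_def by blast
    then have p2: "is_path V E [u, v]" unfolding is_path_walk using assms(2) uV by simp
    have uniq: "\<forall>xs ys. is_path V E xs \<longrightarrow> is_path V E ys \<longrightarrow> hd xs = hd ys
          \<longrightarrow> last xs = last ys \<longrightarrow> xs = ys" using assms(1) unfolding is_tree_def by (elim conjE)
    have "ws = [u, v]" using uniq[rule_format, OF p1 p2] ws(3,4) by simp
    then show False using ws(1) by (simp add: R_def)
  qed
  moreover have "u \<in> S" using uV S_def by simp
  moreover have "\<forall>x z. x \<in> S \<longrightarrow> E x z \<longrightarrow> \<not> (x = u \<and> z = v) \<longrightarrow> z \<in> S"
  proof (intro allI impI)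
    fix x z assume a: "x \<in> S" "E x z" "\<not> (x = u \<and> z = v)"
    have zV: "z \<in> V" using a(2) sg unfolding sgraph_def by blast
    show "z \<in> S"
    proof (cases "x = v \<and> z = u")
      case True then show ?thesis using \<open>u \<in> S\<close> by simp
    next
      case False
      then have "R x z" using a R_def by blast
      then show ?thesis using a(1) zV unfolding S_def by (auto intro: rtranclp.rtrancl_into_rtrancl)
    qed
  qed
  ultimately show ?thesis unfolding sep_set_def S_def by blast
qed

lemma walk_stay_in:
  assumes "sep_set E a b S"
  shows "walk E zs \<Longrightarrow> a \<notin> set zs \<Longrightarrow> hd zs \<in> S \<Longrightarrow> last zs \<in> S"
  using assms by (induction E zs rule: walk.induct) (auto simp: sep_set_def)

lemma walk_stay_out:
  assumes "sep_set E a b S" "\<forall>x y. E x y \<longrightarrow> E y x"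
  shows "walk E zs \<Longrightarrow> a \<notin> set zs \<Longrightarrow> hd zs \<notin> S \<Longrightarrow> last zs \<notin> S"
  using assms by (induction E zs rule: walk.induct) (auto simp: sep_set_def, blast)

lemma unique_walk:
  assumes sym: "\<forall>x y. E x y \<longrightarrow> E y x"
    and br: "\<forall>u v. E u v \<longrightarrow> (\<exists>S. sep_set E u v S)"
  shows "walk E xs \<Longrightarrow> distinct xs \<Longrightarrow> walk E ys \<Longrightarrow> distinct ys \<Longrightarrow> hd xs = hd ys \<Longrightarrow> last xs = last ys \<Longrightarrow> xs = ys"
proof (induction xs arbitrary: ys rule: induct_list012)
  case 1
  then show ?case by simp
next
  case (2 x)
  then show ?case by (cases ys) (auto, metis last_in_set)
next
  case (3 a b xs)
  let ?R = E
  obtain ys' where ys: "ys = a # ys'" using 3 by (cases ys) auto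
  obtain c ys'' where ys': "ys' = c # ys''"
    using 3 ys by (cases ys') (auto, metis last_in_set list.distinct(1))
  show ?case
  proof (cases "b = c")
    case True
    have "b # xs = c # ys''"
    proof (rule 3(2))
      show "walk E (b # xs)" "distinct (b # xs)" using 3(3,4) by auto
      show "walk E (c # ys'')" "distinct (c # ys'')" using 3(5,6) ys ys' by auto
      show "hd (b # xs) = hd (c # ys'')" using True by simp
      show "last (b # xs) = last (c # ys'')" using 3(8) ys ys' by simp
    qed
    then show ?thesis using ys ys' True by simp
  next
    case False
    have "E a b" using 3 by simp
    then obtain S where S: "sep_set E a b S" using br 3 by blast
    have "E a c" using 3 ys ys' by simp
    then have "c \<in> S" using S False unfolding sep_set_def by blast
    then have "last (c # ys'') \<in> S"
      using walk_stay_in[OF S, of "c # ys''"] 3 ys ys' by simp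
    moreover have "last (b # xs) \<notin> S"
      using walk_stay_out[OF S, of "b # xs"] 3 S sym unfolding sep_set_def by simp
    ultimately show ?thesis using 3 ys ys' by simp
  qed
qed

definition newE :: "('a \<Rightarrow> 'a \<Rightarrow> bool) \<Rightarrow> 'a \<Rightarrow> 'a \<Rightarrow> 'a \<Rightarrow> 'a \<Rightarrow> 'a \<Rightarrow> 'a \<Rightarrow> bool" where
  "newE E q y1 y2 a x z \<longleftrightarrow>
     (E x z \<and> \<not> (x = q \<and> z = y1) \<and> \<not> (x = y1 \<and> z = q) \<and> \<not> (x = q \<and> z = y2) \<and> \<not> (x = y2 \<and> z = q))
     \<or> (x = a \<and> (z = q \<or> z = y1 \<or> z = y2)) \<or> (z = a \<and> (x = q \<or> x = y1 \<or> x = y2))"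

lemma transform:
  assumes "a \<noteq> q" "a \<noteq> y1" "a \<noteq> y2"
  shows "walk E xs \<Longrightarrow> distinct xs \<Longrightarrow> a \<notin> set xs \<Longrightarrow> \<not> (y1 \<in> set xs \<and> y2 \<in> set xs) \<Longrightarrow>
    \<exists>xs'. walk (newE E q y1 y2 a) xs' \<and> distinct xs' \<and> hd xs' = hd xs \<and> set xs \<subseteq> set xs'
      \<and> set xs' \<subseteq> insert a (set xs) \<and> (a \<in> set xs' \<longrightarrow> q \<in> set xs \<and> (y1 \<in> set xs \<or> y2 \<in> set xs))"
proof (induction xs rule: induct_list012)
  case 1 then show ?case by simp
next
  case (2 x) then show ?case by (intro exI[of _ "[x]"]) simp
next
  case (3 x y zs)
  have h: "walk E (y # zs)" "distinct (y # zs)" "a \<notin> set (y # zs)" "\<not> (y1 \<in> set (y # zs) \<and> y2 \<in> set (y # zs))"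
    using 3(3-6) by auto
  obtain ys' where ys': "walk (newE E q y1 y2 a) ys'" "distinct ys'" "hd ys' = y" "set (y # zs) \<subseteq> set ys'"
    "set ys' \<subseteq> insert a (set (y # zs))" "a \<in> set ys' \<longrightarrow> q \<in> set (y # zs) \<and> (y1 \<in> set (y # zs) \<or> y2 \<in> set (y # zs))"
    using 3(2)[OF h] by auto
  have ne: "ys' \<noteq> []" using ys'(4) by auto
  then obtain u us where uu: "ys' = u # us" by (cases ys') auto
  have Exy: "E x y" using 3(3) by simp
  have xn: "x \<noteq> a" "x \<notin> set (y # zs)" using 3(4,5) by auto
  have xys: "x \<notin> set ys'" using ys'(5) xn by auto
  show ?case
  proof (cases "newE E q y1 y2 a x y")
    case True
    show ?thesis
      apply (intro exI[of _ "x # ys'"])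
      using True ys' uu xys 3(5) by auto
  next
    case False
    then have bad: "(x = q \<and> (y = y1 \<or> y = y2)) \<or> ((x = y1 \<or> x = y2) \<and> y = q)"
      using Exy unfolding newE_def by blast
    have ays: "a \<notin> set ys'"
    proof
      assume "a \<in> set ys'"
      then have "q \<in> set (y # zs)" "y1 \<in> set (y # zs) \<or> y2 \<in> set (y # zs)" using ys'(6) by auto
      then show False using bad xn 3(6) by auto
    qed
    have n1: "newE E q y1 y2 a x a" "newE E q y1 y2 a a y" using bad unfolding newE_def by auto
    have "walk (newE E q y1 y2 a) (x # a # ys')" using n1 ys'(1,3) uu by simp
    then show ?thesis
      apply (intro exI[of _ "x # a # ys'"])
      using bad ys' uu xys ays xn assms 3(5) by auto
  qed
qed

lemma rtranclp_lift: "R\<^sup>*\<^sup>* x y \<Longrightarrow> (\<And>u w. R u w \<Longrightarrow> S\<^sup>*\<^sup>* u w) \<Longrightarrow> S\<^sup>*\<^sup>* x y"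
  by (induction rule: rtranclp_induct) (auto intro: rtranclp_trans)

theorem mainTheorem3:
  fixes VG :: "'v set" and EG :: "'v \<Rightarrow> 'v \<Rightarrow> bool"
    and VT :: "'a set" and ET :: "'a \<Rightarrow> 'a \<Rightarrow> bool"
    and P :: "'v \<Rightarrow> 'a list" and q y1 y2 :: 'a and h :: nat
  assumes inf: "infinite (UNIV :: 'a set)"
    and G: "sgraph VG EG" "connected_graph VG EG"
    and rep: "vpt_rep VG EG VT ET P"
    and q: "q \<in> VT" "degree ET q = h" "h \<ge> 4"
    and y: "y1 \<in> nbhd ET q" "y2 \<in> nbhd ET q" "y1 \<noteq> y2"
    and sep: "\<forall>v\<in>VG. \<not> {y1, y2} \<subseteq> set (P v)"
  shows "\<exists>aq ET' P'. aq \<notin> VT \<and> vpt_rep VG EG (insert aq VT) ET' P'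
           \<and> degree ET' aq = 3 \<and> degree ET' q = h - 1
           \<and> (\<forall>x \<in> insert aq VT - {q, aq}. degree ET' x = degree ET x)"
proof -
  have tree: "is_tree VT ET" and paths: "\<forall>v\<in>VG. is_path VT ET (P v)"
    and adj: "\<forall>u\<in>VG. \<forall>v\<in>VG. u \<noteq> v \<longrightarrow> (EG u v \<longleftrightarrow> set (P u) \<inter> set (P v) \<noteq> {})"
    using rep unfolding vpt_rep_def by auto
  have sg: "sgraph VT ET" and conn: "connected_graph VT ET" using tree unfolding is_tree_def by auto
  have fin: "finite VT" and inV: "\<And>x y. ET x y \<Longrightarrow> x \<in> VT \<and> y \<in> VT"
    and sym: "\<And>x y. ET x y \<Longrightarrow> ET y x" and irr: "\<And>x. \<not> ET x x"
    using sg unfolding sgraph_def by auto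
  obtain aq where aq: "aq \<notin> VT" using ex_new_if_finite[OF inf fin] by blast
  have e1: "ET q y1" and e2: "ET q y2" using y unfolding nbhd_def by auto
  have y1V: "y1 \<in> VT" and y2V: "y2 \<in> VT" using inV e1 e2 by auto
  have qy: "q \<noteq> y1" "q \<noteq> y2" using irr e1 e2 by auto
  have aqn: "aq \<noteq> q" "aq \<noteq> y1" "aq \<noteq> y2" using aq q(1) y1V y2V by auto
  have noaq: "\<And>x. \<not> ET aq x" "\<And>x. \<not> ET x aq" using inV aq by blast+
  define E' where "E' = newE ET q y1 y2 aq"
  have symE': "\<forall>x z. E' x z \<longrightarrow> E' z x" unfolding E'_def newE_def using sym by blast
  have sgE': "sgraph (insert aq VT) E'"
    unfolding sgraph_def E'_def newE_def using fin inV sym irr q(1) y1V y2V aqn by auto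
  have lift1: "E'\<^sup>*\<^sup>* u w" if "ET u w" for u w
  proof (cases "E' u w")
    case True then show ?thesis by auto
  next
    case False
    then have "E' u aq" "E' aq w" using that unfolding E'_def newE_def by auto
    then show ?thesis by (meson rtranclp.rtrancl_into_rtrancl r_into_rtranclp)
  qed
  have liftE: "E'\<^sup>*\<^sup>* x z" if "ET\<^sup>*\<^sup>* x z" for x z
    using rtranclp_lift[OF that lift1] by blast
  have cq1: "E'\<^sup>*\<^sup>* x q" "E'\<^sup>*\<^sup>* q x" if "x \<in> insert aq VT" for x
  proof -
    have "E' aq q" "E' q aq" unfolding E'_def newE_def by auto
    then show "E'\<^sup>*\<^sup>* x q" "E'\<^sup>*\<^sup>* q x" using that conn q(1) liftE unfolding connected_graph_def by auto
  qed
  have connE': "connected_graph (insert aq VT) E'"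
    unfolding connected_graph_def using cq1 by (meson insert_not_empty rtranclp_trans)
  obtain Sa where Sa: "sep_set ET y1 q Sa" "Sa \<subseteq> VT" using tree_sep[OF tree sym[OF e1]] by blast
  obtain Sb where Sb: "sep_set ET y2 q Sb" "Sb \<subseteq> VT" using tree_sep[OF tree sym[OF e2]] by blast
  have Sa1: "y1 \<in> Sa" "q \<notin> Sa" "\<And>x z. x \<in> Sa \<Longrightarrow> ET x z \<Longrightarrow> \<not> (x = y1 \<and> z = q) \<Longrightarrow> z \<in> Sa"
    using Sa(1) unfolding sep_set_def by auto
  have Sb1: "y2 \<in> Sb" "q \<notin> Sb" "\<And>x z. x \<in> Sb \<Longrightarrow> ET x z \<Longrightarrow> \<not> (x = y2 \<and> z = q) \<Longrightarrow> z \<in> Sb"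
    using Sb(1) unfolding sep_set_def by auto
  have y2Sa: "y2 \<notin> Sa" using Sa1 sym[OF e2] y(3) by metis
  have y1Sb: "y1 \<notin> Sb" using Sb1 sym[OF e1] y(3) by metis
  have aqS: "aq \<notin> Sa" "aq \<notin> Sb" using Sa(2) Sb(2) aq by auto
  have sepA: "sep_set E' aq q (Sa \<union> Sb \<union> {aq})"
    unfolding sep_set_def E'_def newE_def using Sa1 Sb1 y2Sa y1Sb aqS aqn qy noaq by auto
  have sepB1: "sep_set E' y1 aq Sa"
    unfolding sep_set_def E'_def newE_def using Sa1 y2Sa aqS aqn qy noaq by auto
  have sepB2: "sep_set E' y2 aq Sb"
    unfolding sep_set_def E'_def newE_def using Sb1 y1Sb aqS aqn qy noaq by auto
  have sepC: "\<exists>S. sep_set E' u v S" if uvE: "ET u v" "\<not> (u = q \<and> v = y1)" "\<not> (u = y1 \<and> v = q)"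
    "\<not> (u = q \<and> v = y2)" "\<not> (u = y2 \<and> v = q)" for u v
  proof -
    obtain S where S: "sep_set ET u v S" "S \<subseteq> VT" using tree_sep[OF tree uvE(1)] by blast
    have S1: "u \<in> S" "v \<notin> S" "\<And>x z. x \<in> S \<Longrightarrow> ET x z \<Longrightarrow> \<not> (x = u \<and> z = v) \<Longrightarrow> z \<in> S"
      using S(1) unfolding sep_set_def by auto
    have aqS': "aq \<notin> S" using S(2) aq by auto
    have "sep_set E' u v (S \<union> (if q \<in> S then {aq} else {}))"
      unfolding sep_set_def
    proof (intro conjI allI impI)
      show "u \<in> S \<union> (if q \<in> S then {aq} else {})" using S1 by simp
      show "v \<notin> S \<union> (if q \<in> S then {aq} else {})" using S1 inV[OF uvE(1)] aq by auto
      fix x z assume a: "x \<in> S \<union> (if q \<in> S then {aq} else {})" "E' x z" "\<not> (x = u \<and> z = v)"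
      show "z \<in> S \<union> (if q \<in> S then {aq} else {})"
      proof (cases "x = aq")
        case True
        then have qS: "q \<in> S" using a(1) aqS' by (auto split: if_splits)
        have "z = q \<or> z = y1 \<or> z = y2" using a(2) True noaq unfolding E'_def newE_def by auto
        moreover have "y1 \<in> S" using S1(3)[OF qS e1] uvE by auto
        moreover have "y2 \<in> S" using S1(3)[OF qS e2] uvE by auto
        ultimately show ?thesis using qS by auto
      next
        case False
        then have xS: "x \<in> S" using a(1) by (auto split: if_splits)
        show ?thesis
        proof (cases "z = aq")
          case True
          then have "x = q \<or> x = y1 \<or> x = y2" using a(2) False noaq unfolding E'_def newE_def by auto
          moreover have "x = y1 \<Longrightarrow> q \<in> S" using S1(3)[of y1 q] xS sym[OF e1] uvE by auto
          moreover have "x = y2 \<Longrightarrow> q \<in> S" using S1(3)[of y2 q] xS sym[OF e2] uvE by auto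
          ultimately show ?thesis using True xS by auto
        next
          case False
          then have "ET x z" using a(2) \<open>x \<noteq> aq\<close> unfolding E'_def newE_def by auto
          then show ?thesis using S1(3)[OF xS _ a(3)] by auto
        qed
      qed
    qed
    then show ?thesis by blast
  qed
  have br: "\<forall>u v. E' u v \<longrightarrow> (\<exists>S. sep_set E' u v S)"
  proof (intro allI impI)
    fix u v assume uv: "E' u v"
    have fl: "\<exists>S. sep_set E' u v S" if "sep_set E' v u S" for S
      using sep_flip[OF symE' that] by blast
    consider "ET u v \<and> \<not> (u = q \<and> v = y1) \<and> \<not> (u = y1 \<and> v = q) \<and> \<not> (u = q \<and> v = y2) \<and> \<not> (u = y2 \<and> v = q)"
      | "u = aq \<and> v = q" | "u = aq \<and> v = y1" | "u = aq \<and> v = y2"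
      | "v = aq \<and> u = q" | "v = aq \<and> u = y1" | "v = aq \<and> u = y2"
      using uv unfolding E'_def newE_def by blast
    then show "\<exists>S. sep_set E' u v S"
    proof cases
      case 1 then show ?thesis using sepC by blast
    next
      case 2 then show ?thesis using sepA by blast
    next
      case 3 then show ?thesis using fl sepB1 by blast
    next
      case 4 then show ?thesis using fl sepB2 by blast
    next
      case 5 then show ?thesis using fl sepA by blast
    next
      case 6 then show ?thesis using sepB1 by blast
    next
      case 7 then show ?thesis using sepB2 by blast
    qed
  qed
  have treeE': "is_tree (insert aq VT) E'"
    unfolding is_tree_def
  proof (intro conjI sgE' connE' allI impI)
    fix xs ys assume "is_path (insert aq VT) E' xs" "is_path (insert aq VT) E' ys" "hd xs = hd ys" "last xs = last ys"
    then show "xs = ys" unfolding is_path_walk using unique_walk[OF symE' br, of xs ys] by simp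
  qed
  have ex: "\<forall>v\<in>VG. \<exists>xs'. walk E' xs' \<and> distinct xs' \<and> set (P v) \<subseteq> set xs'
      \<and> set xs' \<subseteq> insert aq (set (P v)) \<and> (aq \<in> set xs' \<longrightarrow> q \<in> set (P v))"
  proof
    fix v assume v: "v \<in> VG"
    have pv: "walk ET (P v)" "distinct (P v)" "set (P v) \<subseteq> VT"
      using paths v unfolding is_path_walk by auto
    have "aq \<notin> set (P v)" using pv aq by auto
    moreover have "\<not> (y1 \<in> set (P v) \<and> y2 \<in> set (P v))" using sep v by auto
    ultimately show "\<exists>xs'. walk E' xs' \<and> distinct xs' \<and> set (P v) \<subseteq> set xs'
      \<and> set xs' \<subseteq> insert aq (set (P v)) \<and> (aq \<in> set xs' \<longrightarrow> q \<in> set (P v))"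
      using transform[OF aqn, of ET "P v"] pv unfolding E'_def by blast
  qed
  obtain P' where P': "\<forall>v\<in>VG. walk E' (P' v) \<and> distinct (P' v) \<and> set (P v) \<subseteq> set (P' v)
      \<and> set (P' v) \<subseteq> insert aq (set (P v)) \<and> (aq \<in> set (P' v) \<longrightarrow> q \<in> set (P v))"
    using bchoice[OF ex] by (elim exE) simp
  have vptE': "vpt_rep VG EG (insert aq VT) E' P'"
    unfolding vpt_rep_def
  proof (intro conjI treeE' ballI impI)
    fix v assume v: "v \<in> VG"
    have "set (P v) \<subseteq> VT"
      using paths v unfolding is_path_walk by auto
    then show "is_path (insert aq VT) E' (P' v)" unfolding is_path_walk using P' v by auto
  next
    fix u v assume uv: "u \<in> VG" "v \<in> VG" "u \<noteq> v"
    have "set (P u) \<inter> set (P v) \<noteq> {} \<longleftrightarrow> set (P' u) \<inter> set (P' v) \<noteq> {}"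
    proof
      assume "set (P u) \<inter> set (P v) \<noteq> {}"
      then show "set (P' u) \<inter> set (P' v) \<noteq> {}" using P' uv by blast
    next
      assume "set (P' u) \<inter> set (P' v) \<noteq> {}"
      then obtain w where w: "w \<in> set (P' u)" "w \<in> set (P' v)" by blast
      show "set (P u) \<inter> set (P v) \<noteq> {}"
      proof (cases "w = aq")
        case True then show ?thesis using P' uv w by blast
      next
        case False then show ?thesis using P' uv w by blast
      qed
    qed
    then show "EG u v \<longleftrightarrow> set (P' u) \<inter> set (P' v) \<noteq> {}" using adj uv by blast
  qed
  have finN: "finite (nbhd ET x)" for x
  proof -
    have "nbhd ET x \<subseteq> VT" unfolding nbhd_def using inV by auto
    then show ?thesis using fin finite_subset by blast
  qed
  have d1: "degree E' aq = 3"
  proof -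
    have "nbhd E' aq = {q, y1, y2}" unfolding nbhd_def E'_def newE_def using noaq aqn by auto
    then show ?thesis unfolding degree_def using qy y(3) by simp
  qed
  have d2: "degree E' q = h - 1"
  proof -
    have "nbhd E' q = insert aq (nbhd ET q - {y1, y2})" unfolding nbhd_def E'_def newE_def using noaq aqn qy by auto
    moreover have "card (nbhd ET q - {y1, y2}) = h - 2"
      using card_Diff_subset[of "{y1, y2}" "nbhd ET q"] y q(2) finN unfolding degree_def by simp
    moreover have "aq \<notin> nbhd ET q" using noaq unfolding nbhd_def by auto
    ultimately show ?thesis unfolding degree_def using finN q(3) by simp
  qed
  have d3: "degree E' x = degree ET x" if x: "x \<in> insert aq VT - {q, aq}" for x
  proof -
    have xV: "x \<noteq> q" "x \<noteq> aq" using x by auto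
    have aN: "aq \<notin> nbhd ET x" using noaq unfolding nbhd_def by auto
    show ?thesis
    proof (cases "x = y1 \<or> x = y2")
      case True
      then have eq: "nbhd E' x = insert aq (nbhd ET x - {q})" and qN: "q \<in> nbhd ET x"
        unfolding nbhd_def E'_def newE_def using noaq aqn qy xV y(3) sym e1 e2 by auto
      have "card (nbhd ET x) \<ge> 1" using qN finN[of x] card_0_eq[of "nbhd ET x"] by (cases "card (nbhd ET x)") auto
      then show ?thesis unfolding degree_def eq using finN aN qN by simp
    next
      case False
      then have "nbhd E' x = nbhd ET x" unfolding nbhd_def E'_def newE_def using xV by auto
      then show ?thesis unfolding degree_def by simp
    qed
  qed
  show ?thesis using aq vptE' d1 d2 d3 by blast
qed

end
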